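(* Let $(A,\gamma)$ be a partially ordered set. If $\mathrm{hsdim}(A,\gamma)=1$, then $\gamma$ is a half-space, and $\dim(A,\gamma)=1$ if $\gamma$ is a linear order while $\dim(A,\gamma)=2$ if $\gamma$ is not a linear order. If $\mathrm{hsdim}(A,\gamma)\ge2$, then $\dim(A,\gamma)=\mathrm{hsdim}(A,\gamma)$.
   Context: A quasiorder on $A$ is a reflexive and transitive relation; $\Delta_A=\{(a,a)\mid a\in A\}$. A quasiorder $\alpha$ on $A$ is a half-space if there is a quasiorder $\beta$ on $A$ with $\alpha\cup\beta=A\times A$ and $\alpha\cap\beta=\Delta_A$. A half-space realizer of a quasiorder $\gamma$ on $A$ is a set $\{\alpha_i\mid i\in I\}$ of half-spaces on $A$ with $\bigcap_{i\in I}\alpha_i=\gamma$; $\mathrm{hsdim}(A,\gamma)$ is the minimum cardinality of a half-space realizer. $\dim(A,\gamma)$ is the order dimension: the least cardinality of a set of linear extensions of $\gamma$ whose intersection is $\gamma$. *)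

theory Defs
  imports Main
begin

definition quasiorder_on :: "'a set \<Rightarrow> 'a rel \<Rightarrow> bool" where
  "quasiorder_on A r \<longleftrightarrow> r \<subseteq> A \<times> A \<and> refl_on A r \<and> trans r"

definition partial_order_on' :: "'a set \<Rightarrow> 'a rel \<Rightarrow> bool" where
  "partial_order_on' A r \<longleftrightarrow> quasiorder_on A r \<and> antisym r"

definition linear_order_on' :: "'a set \<Rightarrow> 'a rel \<Rightarrow> bool" where
  "linear_order_on' A r \<longleftrightarrow> partial_order_on' A r \<and> total_on A r"

definition half_space :: "'a set \<Rightarrow> 'a rel \<Rightarrow> bool" where
  "half_space A \<alpha> \<longleftrightarrow> quasiorder_on A \<alpha> \<and>
     (\<exists>\<beta>. quasiorder_on A \<beta> \<and> \<alpha> \<union> \<beta> = A \<times> A \<and> \<alpha> \<inter> \<beta> = Id_on A)"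

text \<open>Intersection of a family of relations on A (the empty family gives A \<times> A).\<close>
definition rel_Inter :: "'a set \<Rightarrow> 'a rel set \<Rightarrow> 'a rel" where
  "rel_Inter A X = (A \<times> A) \<inter> \<Inter> X"

definition hs_realizer :: "'a set \<Rightarrow> 'a rel \<Rightarrow> 'a rel set \<Rightarrow> bool" where
  "hs_realizer A \<gamma> X \<longleftrightarrow> (\<forall>\<alpha>\<in>X. half_space A \<alpha>) \<and> rel_Inter A X = \<gamma>"

definition linear_extension :: "'a set \<Rightarrow> 'a rel \<Rightarrow> 'a rel \<Rightarrow> bool" where
  "linear_extension A \<gamma> L \<longleftrightarrow> linear_order_on' A L \<and> \<gamma> \<subseteq> L"

definition order_realizer :: "'a set \<Rightarrow> 'a rel \<Rightarrow> 'a rel set \<Rightarrow> bool" where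
  "order_realizer A \<gamma> X \<longleftrightarrow> (\<forall>L\<in>X. linear_extension A \<gamma> L) \<and> rel_Inter A X = \<gamma>"

definition hsdim :: "'a set \<Rightarrow> 'a rel \<Rightarrow> 'a rel rel" where
  "hsdim A \<gamma> = card_of (SOME X. hs_realizer A \<gamma> X \<and>
      (\<forall>Y. hs_realizer A \<gamma> Y \<longrightarrow> (card_of X, card_of Y) \<in> ordLeq))"

definition odim :: "'a set \<Rightarrow> 'a rel \<Rightarrow> 'a rel rel" where
  "odim A \<gamma> = card_of (SOME X. order_realizer A \<gamma> X \<and>
      (\<forall>Y. order_realizer A \<gamma> Y \<longrightarrow> (card_of X, card_of Y) \<in> ordLeq))"

end

theory Submission
  imports Defs
begin


lemma szpilrajn:
  assumes "partial_order_on' A g"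
  shows "\<exists>M. linear_extension A g M"
proof -
  define P where "P = {R. partial_order_on' A R \<and> g \<subseteq> R}"
  have ne: "P \<noteq> {}" using assms unfolding P_def by auto
  have ch: "\<Union>C \<in> P" if Cne: "C \<noteq> {}" and Cch: "subset.chain P C" for C
  proof -
    have CP: "C \<subseteq> P" and tot: "\<forall>X\<in>C. \<forall>Y\<in>C. X \<subseteq> Y \<or> Y \<subseteq> X"
      using Cch by (auto simp: subset_chain_def)
    obtain R0 where R0: "R0 \<in> C" using Cne by blast
    have sub: "\<Union>C \<subseteq> A \<times> A" using CP unfolding P_def partial_order_on'_def quasiorder_on_def by blast
    have gsub: "g \<subseteq> \<Union>C" using CP R0 unfolding P_def by blast
    have refl: "refl_on A (\<Union>C)" using sub R0 CP unfolding refl_on_def P_def partial_order_on'_def quasiorder_on_def by blast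
    have tr: "trans (\<Union>C)"
    proof (rule transI)
      fix x y z assume "(x,y) \<in> \<Union>C" "(y,z) \<in> \<Union>C"
      then obtain X Y where X: "X \<in> C" "(x,y) \<in> X" and Y: "Y \<in> C" "(y,z) \<in> Y" by auto
      show "(x,z) \<in> \<Union>C"
      proof (cases "X \<subseteq> Y")
        case True
        then have "trans Y" using Y CP unfolding P_def partial_order_on'_def quasiorder_on_def by blast
        then show ?thesis using True X Y by (meson UnionI subsetD transD)
      next
        case False
        then have "Y \<subseteq> X" using tot X Y by blast
        moreover have "trans X" using X CP unfolding P_def partial_order_on'_def quasiorder_on_def by blast
        ultimately show ?thesis using X Y by (meson UnionI subsetD transD)
      qed
    qed
    have an: "antisym (\<Union>C)"
    proof (rule antisymI)
      fix x y assume "(x,y) \<in> \<Union>C" "(y,x) \<in> \<Union>C"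
      then obtain X Y where X: "X \<in> C" "(x,y) \<in> X" and Y: "Y \<in> C" "(y,x) \<in> Y" by auto
      show "x = y"
      proof (cases "X \<subseteq> Y")
        case True
        then have "antisym Y" using Y CP unfolding P_def partial_order_on'_def by blast
        then show ?thesis using True X Y by (meson antisymD subsetD)
      next
        case False
        then have "Y \<subseteq> X" using tot X Y by blast
        moreover have "antisym X" using X CP unfolding P_def partial_order_on'_def by blast
        ultimately show ?thesis using X Y by (meson antisymD subsetD)
      qed
    qed
    show ?thesis unfolding P_def partial_order_on'_def quasiorder_on_def
      using sub gsub refl tr an by blast
  qed
  obtain M where M: "M \<in> P" and max: "\<forall>X\<in>P. M \<subseteq> X \<longrightarrow> X = M"
    using subset_Zorn_nonempty[OF ne ch] by blast
  have Msub: "M \<subseteq> A \<times> A" and Mr: "refl_on A M" and Mt: "trans M" and Ma: "antisym M" and gM: "g \<subseteq> M"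
    using M unfolding P_def partial_order_on'_def quasiorder_on_def by auto
  have "total_on A M"
  proof (rule ccontr)
    assume "\<not> total_on A M"
    then obtain x y where xy: "x \<in> A" "y \<in> A" "x \<noteq> y" "(x,y) \<notin> M" "(y,x) \<notin> M"
      unfolding total_on_def by blast
    define M' where "M' = M \<union> {(a,b). (a,x) \<in> M \<and> (y,b) \<in> M}"
    have xyM': "(x,y) \<in> M'" using xy Mr unfolding M'_def refl_on_def by auto
    have "M' \<in> P"
    proof -
      have "M' \<subseteq> A \<times> A" using Msub unfolding M'_def by auto
      moreover have "refl_on A M'" using Mr Msub \<open>M' \<subseteq> A \<times> A\<close> unfolding M'_def refl_on_def by auto
      moreover have "trans M'"
        unfolding M'_def trans_def using Mt xy unfolding trans_def by blast
      moreover have "antisym M'"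
        unfolding M'_def antisym_def using Mt Ma xy unfolding trans_def antisym_def by blast
      ultimately show ?thesis using gM unfolding P_def partial_order_on'_def quasiorder_on_def M'_def by blast
    qed
    moreover have "M \<subseteq> M'" unfolding M'_def by auto
    ultimately have "M' = M" using max by blast
    then show False using xyM' xy by simp
  qed
  then show ?thesis unfolding linear_extension_def linear_order_on'_def partial_order_on'_def quasiorder_on_def
    using Msub Mr Mt Ma gM by blast
qed


lemma half_space_cotrans:
  assumes "half_space A a" "x \<in> A" "y \<in> A" "z \<in> A" "(x,y) \<notin> a" "(y,z) \<notin> a" "x \<noteq> z"
  shows "(x,z) \<notin> a"
proof -
  obtain b where b: "quasiorder_on A b" "a \<union> b = A \<times> A" "a \<inter> b = Id_on A"
    using assms(1) unfolding half_space_def by blast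
  have "(x,y) \<in> A \<times> A" "(y,z) \<in> A \<times> A" using assms by auto
  then have "(x,y) \<in> a \<union> b" "(y,z) \<in> a \<union> b" using b(2) by simp_all
  then have "(x,y) \<in> b" "(y,z) \<in> b" using assms by auto
  then have "(x,z) \<in> b" using b(1) unfolding quasiorder_on_def by (meson transD)
  moreover have "(x,z) \<notin> Id_on A" using assms(7) by auto
  ultimately show ?thesis using b(3) by auto
qed

definition hsL :: "'a set \<Rightarrow> 'a rel \<Rightarrow> 'a rel \<Rightarrow> 'a rel \<Rightarrow> 'a rel" where
  "hsL A a T S = {(x,y). x \<in> A \<and> y \<in> A \<and> (((x,y) \<in> a \<and> (y,x) \<notin> a) \<or>
      ((x,y) \<in> a \<and> (y,x) \<in> a \<and> (x,y) \<in> T) \<or> ((x,y) \<notin> a \<and> (y,x) \<notin> a \<and> (x,y) \<in> S))}"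

lemma hsL_lin:
  assumes hs: "half_space A a" and T: "linear_order_on' A T" and S: "linear_order_on' A S"
  shows "linear_order_on' A (hsL A a T S)"
proof -
  have asub: "a \<subseteq> A \<times> A" and ar: "refl_on A a" and at: "trans a"
    using hs unfolding half_space_def quasiorder_on_def by auto
  have co: "\<And>x y z. x \<in> A \<Longrightarrow> y \<in> A \<Longrightarrow> z \<in> A \<Longrightarrow> (x,y) \<notin> a \<Longrightarrow> (y,z) \<notin> a \<Longrightarrow> x \<noteq> z \<Longrightarrow> (x,z) \<notin> a"
    using half_space_cotrans[OF hs] by blast
  have at': "\<And>x y z. (x,y) \<in> a \<Longrightarrow> (y,z) \<in> a \<Longrightarrow> (x,z) \<in> a" using at by (meson transD)
  have ar': "\<And>x. x \<in> A \<Longrightarrow> (x,x) \<in> a" using ar unfolding refl_on_def by blast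
  have Tr: "refl_on A T" and Tt: "\<And>x y z. (x,y) \<in> T \<Longrightarrow> (y,z) \<in> T \<Longrightarrow> (x,z) \<in> T"
    and Ta: "\<And>x y. (x,y) \<in> T \<Longrightarrow> (y,x) \<in> T \<Longrightarrow> x = y" and Ttot: "total_on A T"
    using T unfolding linear_order_on'_def partial_order_on'_def quasiorder_on_def
    by (auto dest: transD antisymD)
  have Sr: "refl_on A S" and St: "\<And>x y z. (x,y) \<in> S \<Longrightarrow> (y,z) \<in> S \<Longrightarrow> (x,z) \<in> S"
    and Sa: "\<And>x y. (x,y) \<in> S \<Longrightarrow> (y,x) \<in> S \<Longrightarrow> x = y" and Stot: "total_on A S"
    using S unfolding linear_order_on'_def partial_order_on'_def quasiorder_on_def
    by (auto dest: transD antisymD)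
  let ?L = "hsL A a T S"
  have sub: "?L \<subseteq> A \<times> A" unfolding hsL_def by auto
  have refl: "refl_on A ?L" using Tr ar' sub unfolding refl_on_def hsL_def by auto
  have an: "antisym ?L"
    unfolding antisym_def hsL_def using Ta Sa by blast
  have tot: "total_on A ?L"
    unfolding total_on_def hsL_def using Ttot Stot unfolding total_on_def by blast
  have I1: "\<And>x y. x \<in> A \<Longrightarrow> y \<in> A \<Longrightarrow> (x,y) \<in> a \<Longrightarrow> (y,x) \<notin> a \<Longrightarrow> (x,y) \<in> ?L"
    unfolding hsL_def by simp
  have I2: "\<And>x y. x \<in> A \<Longrightarrow> y \<in> A \<Longrightarrow> (x,y) \<in> a \<Longrightarrow> (y,x) \<in> a \<Longrightarrow> (x,y) \<in> T \<Longrightarrow> (x,y) \<in> ?L"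
    unfolding hsL_def by simp
  have I3: "\<And>x y. x \<in> A \<Longrightarrow> y \<in> A \<Longrightarrow> (x,y) \<notin> a \<Longrightarrow> (y,x) \<notin> a \<Longrightarrow> (x,y) \<in> S \<Longrightarrow> (x,y) \<in> ?L"
    unfolding hsL_def by simp
  have E: "\<And>x y. (x,y) \<in> ?L \<Longrightarrow> ((x,y) \<in> a \<and> (y,x) \<notin> a) \<or> ((x,y) \<in> a \<and> (y,x) \<in> a \<and> (x,y) \<in> T) \<or> ((x,y) \<notin> a \<and> (y,x) \<notin> a \<and> (x,y) \<in> S)"
    unfolding hsL_def by simp
  have tr: "trans ?L"
  proof (rule transI)
    fix x y z assume xy: "(x,y) \<in> ?L" and yz: "(y,z) \<in> ?L"
    have A: "x \<in> A" "y \<in> A" "z \<in> A" using xy yz unfolding hsL_def by auto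
    show "(x,z) \<in> ?L"
    proof (cases "x = y \<or> y = z")
      case True then show ?thesis using xy yz by auto
    next
      case False
      then have ne: "x \<noteq> y" "y \<noteq> z" by auto
      from E[OF xy] show ?thesis
      proof (elim disjE conjE)
        assume 1: "(x,y) \<in> a" "(y,x) \<notin> a"
        from E[OF yz] show ?thesis
        proof (elim disjE conjE)
          assume 2: "(y,z) \<in> a" "(z,y) \<notin> a"
          have "(x,z) \<in> a" using at' 1 2 by blast
          moreover have "(z,x) \<notin> a" using at' 1 2 by blast
          ultimately show ?thesis using I1 A by blast
        next
          assume 2: "(y,z) \<in> a" "(z,y) \<in> a" "(y,z) \<in> T"
          have "(x,z) \<in> a" using at' 1 2 by blast
          moreover have "(z,x) \<notin> a" using at' 1 2 by blast
          ultimately show ?thesis using I1 A by blast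
        next
          assume 2: "(y,z) \<notin> a" "(z,y) \<notin> a" "(y,z) \<in> S"
          have "(x,z) \<in> a" using co[of x z y] 1 2 A ne by blast
          moreover have "(z,x) \<notin> a" using at' 1 2 by blast
          ultimately show ?thesis using I1 A by blast
        qed
      next
        assume 1: "(x,y) \<in> a" "(y,x) \<in> a" "(x,y) \<in> T"
        from E[OF yz] show ?thesis
        proof (elim disjE conjE)
          assume 2: "(y,z) \<in> a" "(z,y) \<notin> a"
          have "(x,z) \<in> a" using at' 1 2 by blast
          moreover have "(z,x) \<notin> a" using at' 1 2 by blast
          ultimately show ?thesis using I1 A by blast
        next
          assume 2: "(y,z) \<in> a" "(z,y) \<in> a" "(y,z) \<in> T"
          have "(x,z) \<in> a" using at' 1 2 by blast
          moreover have "(z,x) \<in> a" using at' 1 2 by blast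
          moreover have "(x,z) \<in> T" using Tt 1 2 by blast
          ultimately show ?thesis using I2 A by blast
        next
          assume 2: "(y,z) \<notin> a" "(z,y) \<notin> a" "(y,z) \<in> S"
          have "(x,z) \<notin> a" using at' 1 2 by blast
          moreover have "(z,x) \<notin> a" using at' 1 2 by blast
          ultimately have "(x,y) \<notin> a" using co[of x z y] 2 A ne by blast
          then show ?thesis using 1 by blast
        qed
      next
        assume 1: "(x,y) \<notin> a" "(y,x) \<notin> a" "(x,y) \<in> S"
        from E[OF yz] show ?thesis
        proof (elim disjE conjE)
          assume 2: "(y,z) \<in> a" "(z,y) \<notin> a"
          have "(x,z) \<in> a" using co[of y x z] 1 2 A ne by blast
          moreover have "(z,x) \<notin> a" using at' 1 2 by blast
          ultimately show ?thesis using I1 A by blast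
        next
          assume 2: "(y,z) \<in> a" "(z,y) \<in> a" "(y,z) \<in> T"
          have "(x,z) \<notin> a" using at' 1 2 by blast
          moreover have "(z,x) \<notin> a" using at' 1 2 by blast
          ultimately have "(z,y) \<notin> a" using co[of z x y] 1 A ne by blast
          then show ?thesis using 2 by blast
        next
          assume 2: "(y,z) \<notin> a" "(z,y) \<notin> a" "(y,z) \<in> S"
          show ?thesis
          proof (cases "x = z")
            case True then show ?thesis using refl A unfolding refl_on_def by blast
          next
            case False
            have "(x,z) \<notin> a" using co[of x y z] 1 2 A False by blast
            moreover have "(z,x) \<notin> a" using co[of z y x] 1 2 A False by blast
            moreover have "(x,z) \<in> S" using St 1 2 by blast
            ultimately show ?thesis using I3 A by blast
          qed
        qed
      qed
    qed
  qed
  show ?thesis unfolding linear_order_on'_def partial_order_on'_def quasiorder_on_def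
    using sub refl tr an tot by blast
qed


lemma lin_conv:
  assumes "linear_order_on' A L" shows "linear_order_on' A (L\<inverse>)"
proof -
  have a: "L \<subseteq> A \<times> A" "refl_on A L" "trans L" "antisym L" "total_on A L"
    using assms unfolding linear_order_on'_def partial_order_on'_def quasiorder_on_def by auto
  have "L\<inverse> \<subseteq> A \<times> A" using a(1) by auto
  moreover have "refl_on A (L\<inverse>)" using a(2) by (simp add: refl_on_def)
  moreover have "trans (L\<inverse>)" using a(3) by simp
  moreover have "antisym (L\<inverse>)" using a(4) by simp
  moreover have "total_on A (L\<inverse>)" using a(5) by (simp add: total_on_def)
  ultimately show ?thesis unfolding linear_order_on'_def partial_order_on'_def quasiorder_on_def by blast
qed

lemma lin_half_space:
  assumes "linear_order_on' A L" shows "half_space A L"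
proof -
  have a: "L \<subseteq> A \<times> A" "refl_on A L" "trans L" "antisym L" "total_on A L"
    using assms unfolding linear_order_on'_def partial_order_on'_def quasiorder_on_def by auto
  have q: "quasiorder_on A L" and q': "quasiorder_on A (L\<inverse>)"
    using assms lin_conv[OF assms] unfolding linear_order_on'_def partial_order_on'_def by auto
  have "L \<union> L\<inverse> = A \<times> A"
  proof
    show "L \<union> L\<inverse> \<subseteq> A \<times> A" using a(1) by auto
  next
    show "A \<times> A \<subseteq> L \<union> L\<inverse>"
    proof (rule subrelI)
      fix x y assume "(x,y) \<in> A \<times> A"
      then have xy: "x \<in> A" "y \<in> A" by auto
      show "(x,y) \<in> L \<union> L\<inverse>"
      proof (cases "x = y")
        case True then show ?thesis using a(2) xy by (simp add: refl_on_def)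
      next
        case False then show ?thesis using a(5) xy by (auto simp: total_on_def)
      qed
    qed
  qed
  moreover have "L \<inter> L\<inverse> = Id_on A"
  proof
    show "L \<inter> L\<inverse> \<subseteq> Id_on A" using a(1,4) by (auto simp: antisym_def Id_on_def)
  next
    show "Id_on A \<subseteq> L \<inter> L\<inverse>" using a(2) by (auto simp: refl_on_def Id_on_def)
  qed
  ultimately show ?thesis unfolding half_space_def using q q' by blast
qed

lemma order_hs_realizer: "order_realizer A g Y \<Longrightarrow> hs_realizer A g Y"
  unfolding order_realizer_def hs_realizer_def linear_extension_def
  using lin_half_space by blast

lemma ext_pair:
  assumes po: "partial_order_on' A g" and xy: "x \<in> A" "y \<in> A" "(x,y) \<notin> g"
  shows "\<exists>L. linear_extension A g L \<and> (y,x) \<in> L"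
proof -
  have gsub: "g \<subseteq> A \<times> A" and gr: "refl_on A g" and gt: "trans g" and ga: "antisym g"
    using po unfolding partial_order_on'_def quasiorder_on_def by auto
  define g' where "g' = g \<union> {(a,b). (a,y) \<in> g \<and> (x,b) \<in> g}"
  have "partial_order_on' A g'"
  proof -
    have "g' \<subseteq> A \<times> A" using gsub unfolding g'_def by auto
    moreover have "refl_on A g'" using gr gsub \<open>g' \<subseteq> A \<times> A\<close> unfolding g'_def refl_on_def by auto
    moreover have "trans g'"
      unfolding g'_def trans_def using gt xy unfolding trans_def by blast
    moreover have "antisym g'"
      unfolding g'_def antisym_def using gt ga xy unfolding trans_def antisym_def by blast
    ultimately show ?thesis unfolding partial_order_on'_def quasiorder_on_def by blast
  qed
  then obtain L where L: "linear_extension A g' L" using szpilrajn by blast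
  have "(y,x) \<in> g'" using gr xy unfolding g'_def refl_on_def by auto
  then show ?thesis using L unfolding linear_extension_def g'_def by auto
qed

lemma order_realizer_exists:
  assumes po: "partial_order_on' A g"
  shows "order_realizer A g {L. linear_extension A g L}"
proof -
  have gsub: "g \<subseteq> A \<times> A" and gr: "refl_on A g"
    using po unfolding partial_order_on'_def quasiorder_on_def by auto
  have "rel_Inter A {L. linear_extension A g L} = g"
  proof
    show "g \<subseteq> rel_Inter A {L. linear_extension A g L}"
      using gsub unfolding rel_Inter_def linear_extension_def by blast
  next
    show "rel_Inter A {L. linear_extension A g L} \<subseteq> g"
    proof
      fix p assume p: "p \<in> rel_Inter A {L. linear_extension A g L}"
      obtain x y where pxy: "p = (x,y)" by (cases p)
      have xy: "x \<in> A" "y \<in> A" and all: "\<And>L. linear_extension A g L \<Longrightarrow> (x,y) \<in> L"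
        using p pxy unfolding rel_Inter_def by auto
      show "p \<in> g"
      proof (rule ccontr)
        assume "p \<notin> g"
        then obtain L where L: "linear_extension A g L" "(y,x) \<in> L"
          using ext_pair[OF po xy] pxy by auto
        then have "x = y" using all[OF L(1)]
          unfolding linear_extension_def linear_order_on'_def partial_order_on'_def antisym_def by blast
        then show False using \<open>p \<notin> g\<close> pxy gr xy unfolding refl_on_def by auto
      qed
    qed
  qed
  then show ?thesis unfolding order_realizer_def by blast
qed

lemma min_exists:
  fixes P :: "'b set \<Rightarrow> bool"
  assumes "\<exists>X. P X"
  shows "P (SOME X. P X \<and> (\<forall>Y. P Y \<longrightarrow> (card_of X, card_of Y) \<in> ordLeq)) \<and>
    (\<forall>Y. P Y \<longrightarrow> (card_of (SOME X. P X \<and> (\<forall>Y. P Y \<longrightarrow> (card_of X, card_of Y) \<in> ordLeq)), card_of Y) \<in> ordLeq)"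
proof -
  have "\<exists>r \<in> card_of ` {X. P X}. \<forall>r' \<in> card_of ` {X. P X}. (r, r') \<in> ordLeq"
    by (rule exists_minim_Well_order) (use assms card_of_Well_order in auto)
  then have "\<exists>X. P X \<and> (\<forall>Y. P Y \<longrightarrow> (card_of X, card_of Y) \<in> ordLeq)" by auto
  from someI_ex[OF this] show ?thesis by blast
qed

lemma hsL_ext:
  assumes hs: "half_space A a" and ga: "g \<subseteq> a" and M: "linear_extension A g M"
    and S: "linear_order_on' A S"
  shows "linear_extension A g (hsL A a M S)"
proof -
  have "linear_order_on' A (hsL A a M S)"
    using hsL_lin[OF hs _ S] M unfolding linear_extension_def by blast
  moreover have "g \<subseteq> hsL A a M S"
  proof
    fix p assume "p \<in> g"
    moreover obtain x y where "p = (x,y)" by (cases p)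
    ultimately have "(x,y) \<in> g" by simp
    moreover have "g \<subseteq> A \<times> A" using hs ga unfolding half_space_def quasiorder_on_def by blast
    moreover have "(x,y) \<in> a" using \<open>(x,y) \<in> g\<close> ga by blast
    moreover have "(x,y) \<in> M" using \<open>(x,y) \<in> g\<close> M unfolding linear_extension_def by blast
    ultimately show "p \<in> hsL A a M S" using \<open>p = (x,y)\<close> unfolding hsL_def by auto
  qed
  ultimately show ?thesis unfolding linear_extension_def by blast
qed

lemma lin_antisym: "linear_extension A g L \<Longrightarrow> (x,y) \<in> L \<Longrightarrow> (y,x) \<in> L \<Longrightarrow> x = y"
  unfolding linear_extension_def linear_order_on'_def partial_order_on'_def antisym_def by blast


lemma realizer_sub:
  assumes "hs_realizer A g X" "a \<in> X" shows "g \<subseteq> a" "half_space A a"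
  using assms unfolding hs_realizer_def rel_Inter_def by auto

lemma hsL_same:
  assumes "(x,y) \<in> a \<or> (y,x) \<in> a"
  shows "(x,y) \<in> hsL A a T S \<longleftrightarrow> (x,y) \<in> hsL A a T S'"
  using assms unfolding hsL_def by auto

lemma hsL_Eb:
  assumes "(x,y) \<notin> a" "(y,x) \<notin> a" "(x,y) \<in> hsL A a T S"
  shows "(x,y) \<in> S"
  using assms unfolding hsL_def by auto

lemma hsL_strict:
  assumes "x \<in> A" "y \<in> A" "(x,y) \<in> a" "(y,x) \<notin> a"
  shows "(x,y) \<in> hsL A a T S"
  using assms unfolding hsL_def by auto

lemma construct:
  assumes po: "partial_order_on' A g" and X: "hs_realizer A g X"
    and a12: "a1 \<in> X" "a2 \<in> X" "a1 \<noteq> a2"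
  shows "\<exists>F. order_realizer A g (F ` X)"
proof -
  obtain M where M: "linear_extension A g M" using szpilrajn[OF po] by blast
  have Mlin: "linear_order_on' A M" using M unfolding linear_extension_def by blast
  define B where "B = hsL A a1 M M"
  define G where "G = (\<lambda>a. hsL A a M (B\<inverse>))"
  define F where "F = (\<lambda>a. if a = a1 then hsL A a1 M ((G a2)\<inverse>) else G a)"
  have hs: "\<And>a. a \<in> X \<Longrightarrow> half_space A a" and ga: "\<And>a. a \<in> X \<Longrightarrow> g \<subseteq> a"
    using realizer_sub[OF X] by auto
  have Blin: "linear_order_on' A B" unfolding B_def using hsL_lin[OF hs[OF a12(1)] Mlin Mlin] .
  have Gext: "\<And>a. a \<in> X \<Longrightarrow> linear_extension A g (G a)"
    unfolding G_def using hsL_ext[OF hs ga M lin_conv[OF Blin]] by blast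
  have Fext: "\<And>a. a \<in> X \<Longrightarrow> linear_extension A g (F a)"
  proof -
    fix a assume a: "a \<in> X"
    show "linear_extension A g (F a)"
    proof (cases "a = a1")
      case True
      have "linear_order_on' A (G a2)" using Gext[OF a12(2)] unfolding linear_extension_def by blast
      then show ?thesis unfolding F_def using True hsL_ext[OF hs[OF a12(1)] ga[OF a12(1)] M lin_conv] by simp
    next
      case False then show ?thesis unfolding F_def using Gext[OF a] by simp
    qed
  qed
  have F2: "F a2 = G a2" unfolding F_def using a12(3) by auto
  have gsub: "g \<subseteq> A \<times> A" and gr: "refl_on A g"
    using po unfolding partial_order_on'_def quasiorder_on_def by auto
  have "rel_Inter A (F ` X) = g"
  proof
    show "g \<subseteq> rel_Inter A (F ` X)"
      using gsub Fext unfolding rel_Inter_def linear_extension_def by blast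
  next
    show "rel_Inter A (F ` X) \<subseteq> g"
    proof (rule subrelI)
      fix x y assume p: "(x,y) \<in> rel_Inter A (F ` X)"
      have xy: "x \<in> A" "y \<in> A" and all: "\<And>a. a \<in> X \<Longrightarrow> (x,y) \<in> F a"
        using p unfolding rel_Inter_def by auto
      show "(x,y) \<in> g"
      proof (rule ccontr)
        assume ng: "(x,y) \<notin> g"
        then have "x \<noteq> y" using gr xy unfolding refl_on_def by auto
        from ng obtain a where a: "a \<in> X" "(x,y) \<notin> a"
          using X xy unfolding hs_realizer_def rel_Inter_def by blast
        have "\<exists>a'\<in>X. (y,x) \<in> F a'"
        proof (cases "(y,x) \<in> a")
          case True
          have "(y,x) \<in> F a" using hsL_strict[OF xy(2,1) True a(2)] unfolding F_def G_def
            by (cases "a = a1") auto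
          then show ?thesis using a(1) by blast
        next
          case False
          show ?thesis
          proof (cases "a = a1")
            case True
            have "(x,y) \<in> hsL A a1 M ((G a2)\<inverse>)" using all[OF a12(1)] unfolding F_def by simp
            moreover have "(x,y) \<notin> a1" "(y,x) \<notin> a1" using a(2) False True by auto
            ultimately have "(x,y) \<in> (G a2)\<inverse>" using hsL_Eb by metis
            then have "(y,x) \<in> F a2" using F2 by simp
            then show ?thesis using a12(2) by blast
          next
            case na1: False
            have "(x,y) \<in> hsL A a M (B\<inverse>)" using all[OF a(1)] na1 unfolding F_def G_def by simp
            then have "(x,y) \<in> B\<inverse>" by (rule hsL_Eb[OF a(2) False])
            then have yxB: "(y,x) \<in> B" by simp
            show ?thesis
            proof (cases "(x,y) \<in> a1 \<or> (y,x) \<in> a1")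
              case True
              then have "(y,x) \<in> hsL A a1 M ((G a2)\<inverse>)"
                using yxB hsL_same[of y x a1 A M M "(G a2)\<inverse>"] unfolding B_def by auto
              then have "(y,x) \<in> F a1" unfolding F_def by simp
              then show ?thesis using a12(1) by blast
            next
              case False
              have "(x,y) \<in> hsL A a1 M ((G a2)\<inverse>)" using all[OF a12(1)] unfolding F_def by simp
              moreover have "(x,y) \<notin> a1" "(y,x) \<notin> a1" using False by auto
              ultimately have "(x,y) \<in> (G a2)\<inverse>" using hsL_Eb by metis
              then have "(y,x) \<in> F a2" using F2 by simp
              then show ?thesis using a12(2) by blast
            qed
          qed
        qed
        then obtain a' where "a' \<in> X" "(y,x) \<in> F a'" by blast
        then have "x = y" using lin_antisym[OF Fext all] by blast
        then show False using \<open>x \<noteq> y\<close> by simp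
      qed
    qed
  qed
  then have "order_realizer A g (F ` X)" unfolding order_realizer_def using Fext by blast
  then show ?thesis by blast
qed

lemma construct2:
  assumes po: "partial_order_on' A g" and hs: "half_space A g"
  shows "\<exists>L1 L2. order_realizer A g {L1, L2}"
proof -
  obtain M where M: "linear_extension A g M" using szpilrajn[OF po] by blast
  have Mlin: "linear_order_on' A M" using M unfolding linear_extension_def by blast
  define L1 where "L1 = hsL A g M M"
  define L2 where "L2 = hsL A g M (M\<inverse>)"
  have e1: "linear_extension A g L1" unfolding L1_def using hsL_ext[OF hs _ M Mlin] by blast
  have e2: "linear_extension A g L2" unfolding L2_def using hsL_ext[OF hs _ M lin_conv[OF Mlin]] by blast
  have gsub: "g \<subseteq> A \<times> A" and gr: "refl_on A g"
    using po unfolding partial_order_on'_def quasiorder_on_def by auto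
  have "rel_Inter A {L1, L2} = g"
  proof
    show "g \<subseteq> rel_Inter A {L1, L2}"
      using gsub e1 e2 unfolding rel_Inter_def linear_extension_def by blast
  next
    show "rel_Inter A {L1, L2} \<subseteq> g"
    proof (rule subrelI)
      fix x y assume p: "(x,y) \<in> rel_Inter A {L1, L2}"
      have xy: "x \<in> A" "y \<in> A" and in12: "(x,y) \<in> L1" "(x,y) \<in> L2"
        using p unfolding rel_Inter_def by auto
      show "(x,y) \<in> g"
      proof (rule ccontr)
        assume ng: "(x,y) \<notin> g"
        then have "x \<noteq> y" using gr xy unfolding refl_on_def by auto
        show False
        proof (cases "(y,x) \<in> g")
          case True
          then have "(y,x) \<in> L1" using e1 unfolding linear_extension_def by blast
          then show False using lin_antisym[OF e1 in12(1)] \<open>x \<noteq> y\<close> by blast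
        next
          case False
          have "(x,y) \<in> M" using hsL_Eb[OF ng False] in12(1) unfolding L1_def by blast
          moreover have "(x,y) \<in> M\<inverse>" using hsL_Eb[OF ng False] in12(2) unfolding L2_def by blast
          ultimately show False using lin_antisym[OF M] \<open>x \<noteq> y\<close> by blast
        qed
      qed
    qed
  qed
  then show ?thesis unfolding order_realizer_def using e1 e2 by blast
qed


lemma leq_fin:
  assumes "(card_of Y, card_of B) \<in> ordLeq" "finite B"
  shows "finite Y \<and> card Y \<le> card B"
proof -
  obtain f where f: "inj_on f Y" "f ` Y \<subseteq> B" using card_of_ordLeq[of Y B] assms(1) by blast
  have fin: "finite Y" using card_of_ordLeq_finite assms by blast
  have "card Y = card (f ` Y)" using f(1) by (simp add: card_image)
  also have "\<dots> \<le> card B" using f(2) assms(2) by (simp add: card_mono)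
  finally show ?thesis using fin by simp
qed

lemma iso_card:
  assumes "finite Y" "finite B" "card Y = card B"
  shows "(card_of Y, card_of B) \<in> ordIso"
proof -
  obtain h where "bij_betw h Y B" using finite_same_card_bij assms by blast
  then show ?thesis using card_of_ordIso[of Y B] by blast
qed

lemma iso_fin:
  assumes "(card_of Y, card_of B) \<in> ordIso" "finite B"
  shows "finite Y \<and> card Y = card B"
proof -
  obtain h where h: "bij_betw h Y B" using card_of_ordIso[of Y B] assms(1) by blast
  then show ?thesis using assms(2) bij_betw_finite bij_betw_same_card by blast
qed

theorem theorem2p16:
  fixes A :: "'a set" and \<gamma> :: "'a rel"
  assumes "partial_order_on' A \<gamma>"
  shows "((hsdim A \<gamma>, card_of {1::nat}) \<in> ordIso \<longrightarrow>
            half_space A \<gamma> \<and>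
            (linear_order_on' A \<gamma> \<longrightarrow> (odim A \<gamma>, card_of {1::nat}) \<in> ordIso) \<and>
            (\<not> linear_order_on' A \<gamma> \<longrightarrow> (odim A \<gamma>, card_of {1::nat, 2}) \<in> ordIso))
       \<and> ((card_of {1::nat, 2}, hsdim A \<gamma>) \<in> ordLeq \<longrightarrow> (odim A \<gamma>, hsdim A \<gamma>) \<in> ordIso)"
proof -
  note po = assms
  have gsub: "\<gamma> \<subseteq> A \<times> A" using po unfolding partial_order_on'_def quasiorder_on_def by auto
  have exO: "\<exists>Y. order_realizer A \<gamma> Y" using order_realizer_exists[OF po] by blast
  then have exH: "\<exists>X. hs_realizer A \<gamma> X" using order_hs_realizer by blast
  define X0 where "X0 = (SOME X. hs_realizer A \<gamma> X \<and>
      (\<forall>Y. hs_realizer A \<gamma> Y \<longrightarrow> (card_of X, card_of Y) \<in> ordLeq))"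
  define Y0 where "Y0 = (SOME X. order_realizer A \<gamma> X \<and>
      (\<forall>Y. order_realizer A \<gamma> Y \<longrightarrow> (card_of X, card_of Y) \<in> ordLeq))"
  have HX0: "hs_realizer A \<gamma> X0" and minX: "\<And>Y. hs_realizer A \<gamma> Y \<Longrightarrow> (card_of X0, card_of Y) \<in> ordLeq"
    using min_exists[OF exH] unfolding X0_def by blast+
  have HY0: "order_realizer A \<gamma> Y0" and minY: "\<And>Y. order_realizer A \<gamma> Y \<Longrightarrow> (card_of Y0, card_of Y) \<in> ordLeq"
    using min_exists[OF exO] unfolding Y0_def by blast+
  have hsd: "hsdim A \<gamma> = card_of X0" unfolding hsdim_def X0_def ..
  have od: "odim A \<gamma> = card_of Y0" unfolding odim_def Y0_def ..
  have XY: "(card_of X0, card_of Y0) \<in> ordLeq" using minX[OF order_hs_realizer[OF HY0]] .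
  have Y0ne: "Y0 \<noteq> {}" if X0ne: "X0 \<noteq> {}"
  proof
    assume "Y0 = {}"
    then have "\<gamma> = A \<times> A" using HY0 unfolding order_realizer_def rel_Inter_def by auto
    then have "hs_realizer A \<gamma> {}" unfolding hs_realizer_def rel_Inter_def by auto
    then have "(card_of X0, card_of ({}::'a rel set)) \<in> ordLeq" using minX by blast
    then have "card X0 = 0 \<and> finite X0" using leq_fin[of X0 "{}"] by auto
    then show False using X0ne by auto
  qed
  have part1: "(hsdim A \<gamma>, card_of {1::nat}) \<in> ordIso \<longrightarrow>
            half_space A \<gamma> \<and>
            (linear_order_on' A \<gamma> \<longrightarrow> (odim A \<gamma>, card_of {1::nat}) \<in> ordIso) \<and>
            (\<not> linear_order_on' A \<gamma> \<longrightarrow> (odim A \<gamma>, card_of {1::nat, 2}) \<in> ordIso)"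
  proof
    assume "(hsdim A \<gamma>, card_of {1::nat}) \<in> ordIso"
    then have "finite X0 \<and> card X0 = 1" using iso_fin[of X0 "{1::nat}"] hsd by simp
    then obtain a where Xa: "X0 = {a}" using card_1_singletonE by blast
    have ha: "half_space A a" and ga: "rel_Inter A {a} = \<gamma>" using HX0 Xa unfolding hs_realizer_def by auto
    have "a \<subseteq> A \<times> A" using ha unfolding half_space_def quasiorder_on_def by blast
    then have "a = \<gamma>" using ga unfolding rel_Inter_def by auto
    then have hsg: "half_space A \<gamma>" using ha by simp
    have Yne: "Y0 \<noteq> {}" using Y0ne Xa by blast
    have lin: "(odim A \<gamma>, card_of {1::nat}) \<in> ordIso" if "linear_order_on' A \<gamma>"
    proof -
      have "order_realizer A \<gamma> {\<gamma>}"
        unfolding order_realizer_def linear_extension_def rel_Inter_def using that gsub by auto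
      then have c: "finite Y0 \<and> card Y0 \<le> 1" using leq_fin[OF minY] by fastforce
      have c0: "card Y0 \<noteq> 0" using Yne c card_0_eq by blast
      have c1: "card Y0 \<le> 1" using c by blast
      have "card Y0 = 1" "finite Y0" using c0 c1 c by linarith+
      then have "card Y0 = card {1::nat}" "finite Y0" by simp_all
      then show ?thesis unfolding od by (intro iso_card) simp_all
    qed
    have nlin: "(odim A \<gamma>, card_of {1::nat, 2}) \<in> ordIso" if nl: "\<not> linear_order_on' A \<gamma>"
    proof -
      obtain L1 L2 where "order_realizer A \<gamma> {L1, L2}" using construct2[OF po hsg] by blast
      then have "finite Y0 \<and> card Y0 \<le> card {L1, L2}" using leq_fin[OF minY] by blast
      moreover have "card {L1, L2} \<le> 2" by (simp add: card_insert_if)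
      moreover have "card Y0 \<noteq> 0" using Yne calculation card_0_eq by blast
      moreover have "card Y0 \<noteq> 1"
      proof
        assume "card Y0 = 1"
        then obtain L where "Y0 = {L}" using card_1_singletonE by blast
        then have "linear_extension A \<gamma> L" "rel_Inter A {L} = \<gamma>" using HY0 unfolding order_realizer_def by auto
        moreover then have "L \<subseteq> A \<times> A" unfolding linear_extension_def linear_order_on'_def
            partial_order_on'_def quasiorder_on_def by blast
        ultimately have "\<gamma> = L" "linear_order_on' A L" unfolding rel_Inter_def linear_extension_def by auto
        then have "linear_order_on' A \<gamma>" by simp
        then show False using nl by simp
      qed
      ultimately have "card Y0 = 2" "finite Y0" by linarith+
      then have "card Y0 = card {1::nat, 2}" "finite Y0" by simp_all
      then show ?thesis unfolding od by (intro iso_card) simp_all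
    qed
    show "half_space A \<gamma> \<and>
            (linear_order_on' A \<gamma> \<longrightarrow> (odim A \<gamma>, card_of {1::nat}) \<in> ordIso) \<and>
            (\<not> linear_order_on' A \<gamma> \<longrightarrow> (odim A \<gamma>, card_of {1::nat, 2}) \<in> ordIso)"
      using hsg lin nlin by blast
  qed
  have part2: "(card_of {1::nat, 2}, hsdim A \<gamma>) \<in> ordLeq \<longrightarrow> (odim A \<gamma>, hsdim A \<gamma>) \<in> ordIso"
  proof
    assume "(card_of {1::nat, 2}, hsdim A \<gamma>) \<in> ordLeq"
    then obtain f where f: "inj_on f {1::nat, 2}" "f ` {1, 2} \<subseteq> X0"
      using card_of_ordLeq[of "{1::nat,2}" X0] hsd by auto
    have a12: "f 1 \<in> X0" "f 2 \<in> X0" "f 1 \<noteq> f 2" using f unfolding inj_on_def by auto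
    obtain F where "order_realizer A \<gamma> (F ` X0)" using construct[OF po HX0 a12] by blast
    then have "(card_of Y0, card_of (F ` X0)) \<in> ordLeq" using minY by blast
    moreover have "(card_of (F ` X0), card_of X0) \<in> ordLeq" by (rule card_of_image)
    ultimately have "(card_of Y0, card_of X0) \<in> ordLeq" by (rule ordLeq_transitive)
    then have "(card_of Y0, card_of X0) \<in> ordIso" using XY by (simp add: ordIso_iff_ordLeq)
    then show "(odim A \<gamma>, hsdim A \<gamma>) \<in> ordIso" unfolding od hsd .
  qed
  show ?thesis using part1 part2 by blast
qed

end
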